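(* For fixed $t\in(0,1]$, the function $p\mapsto \pi(p,t)$ is continuous on $[0,t]$.
   Context: For $p\in[0,1]$ let $\beta_1^p,\beta_2^p,\ldots$ be independent Bernoulli random variables with success probability $p$. A stake sequence is a sequence $\gamma=(c_1,c_2,\ldots)$ of non-negative reals with $c_1\ge c_2\ge\cdots$ and $\sum_i c_i=1$; write $S^p_\gamma=\sum_i c_i\beta^p_i$. For $0\le p\le t\le 1$ define $\pi(p,t)=\sup\{\mathbf P(S^p_\gamma\ge t)\mid \gamma \text{ a stake sequence}\}$. *)

theory Defs
  imports "HOL-Probability.Probability"
begin

text \<open>Infinite sequence of independent Bernoulli(p) variables, realised as the
  coordinates of the infinite product probability space on nat => bool.\<close>
definition bern_space :: "real \<Rightarrow> (nat \<Rightarrow> bool) measure" where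
  "bern_space p = PiM UNIV (\<lambda>_. measure_pmf (bernoulli_pmf p))"

definition stake_seq :: "(nat \<Rightarrow> real) \<Rightarrow> bool" where
  "stake_seq c \<longleftrightarrow> (\<forall>i. 0 \<le> c i) \<and> decseq c \<and> c sums 1"

definition stake_sum :: "(nat \<Rightarrow> real) \<Rightarrow> (nat \<Rightarrow> bool) \<Rightarrow> real" where
  "stake_sum c \<omega> = (\<Sum>i. c i * (if \<omega> i then 1 else 0))"

definition pi_fun :: "real \<Rightarrow> real \<Rightarrow> real" where
  "pi_fun p t = Sup {measure (bern_space p) {\<omega> \<in> space (bern_space p). stake_sum c \<omega> \<ge> t}
                     | c. stake_seq c}"

end

theory Submission
  imports Defs "HOL-Library.Diagonal_Subsequence"
begin


definition bw :: "real \<Rightarrow> nat set \<Rightarrow> nat set \<Rightarrow> real" where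
  "bw p A B = (\<Prod>i\<in>A. if i \<in> B then p else 1 - p)"

definition EE :: "real \<Rightarrow> (nat \<Rightarrow> real) \<Rightarrow> nat set \<Rightarrow> (real \<Rightarrow> real) \<Rightarrow> real" where
  "EE p c A g = (\<Sum>B\<in>Pow A. bw p A B * g (sum c B))"

lemma bw_nonneg: "0 \<le> p \<Longrightarrow> p \<le> 1 \<Longrightarrow> 0 \<le> bw p A B"
  by (auto simp: bw_def intro!: prod_nonneg)

lemma bw_split:
  assumes "finite A1" "finite A2" "A1 \<inter> A2 = {}"
  shows "bw p (A1 \<union> A2) B = bw p A1 (B \<inter> A1) * bw p A2 (B \<inter> A2)"
  unfolding bw_def using assms
  by (subst prod.union_disjoint) (auto intro!: arg_cong2[where f="(*)"] prod.cong)

lemma EE_split: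
  assumes "finite A1" "finite A2" "A1 \<inter> A2 = {}"
  shows "EE p c (A1 \<union> A2) g =
    (\<Sum>B1\<in>Pow A1. \<Sum>B2\<in>Pow A2. bw p A1 B1 * bw p A2 B2 * g (sum c B1 + sum c B2))"
proof -
  have "(\<Sum>B1\<in>Pow A1. \<Sum>B2\<in>Pow A2. bw p A1 B1 * bw p A2 B2 * g (sum c B1 + sum c B2))
     = (\<Sum>(B1,B2)\<in>Pow A1 \<times> Pow A2. bw p A1 B1 * bw p A2 B2 * g (sum c B1 + sum c B2))"
    by (rule sum.cartesian_product)
  also have "\<dots> = EE p c (A1 \<union> A2) g"
    unfolding EE_def
  proof (rule sum.reindex_bij_witness[where j="\<lambda>(B1,B2). B1 \<union> B2" and i="\<lambda>B. (B \<inter> A1, B \<inter> A2)"])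
    fix a assume a: "a \<in> Pow A1 \<times> Pow A2"
    then obtain B1 B2 where ab: "a = (B1, B2)" "B1 \<subseteq> A1" "B2 \<subseteq> A2" by auto
    have f: "finite B1" "finite B2" using ab assms by (auto intro: finite_subset)
    have i1: "(B1 \<union> B2) \<inter> A1 = B1" and i2: "(B1 \<union> B2) \<inter> A2 = B2" using ab assms by auto
    have "sum c (B1 \<union> B2) = sum c B1 + sum c B2"
      using f ab assms by (intro sum.union_disjoint) auto
    then show "bw p (A1 \<union> A2) (case a of (B1, B2) \<Rightarrow> B1 \<union> B2) * g (sum c (case a of (B1, B2) \<Rightarrow> B1 \<union> B2)) =
       (case a of (B1, B2) \<Rightarrow> bw p A1 B1 * bw p A2 B2 * g (sum c B1 + sum c B2))"
      using bw_split[OF assms, of p "B1 \<union> B2"] ab i1 i2 by simp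
  qed (use assms in auto)
  finally show ?thesis by simp
qed

definition thr :: "real \<Rightarrow> real \<Rightarrow> real" where
  "thr s y = (if s \<le> y then 1 else 0)"

lemma EE_empty[simp]: "EE p c {} g = g 0"
  by (simp add: EE_def bw_def)

lemma EE_insert:
  assumes "finite A" "a \<notin> A"
  shows "EE p c (insert a A) g = p * EE p c A (\<lambda>y. g (y + c a)) + (1 - p) * EE p c A g"
proof -
  have "insert a A = A \<union> {a}" by auto
  then have "EE p c (insert a A) g =
    (\<Sum>B1\<in>Pow A. \<Sum>B2\<in>Pow {a}. bw p A B1 * bw p {a} B2 * g (sum c B1 + sum c B2))"
    using EE_split[of A "{a}" p c g] assms by simp
  also have "\<dots> = (\<Sum>B1\<in>Pow A. p * (bw p A B1 * g (sum c B1 + c a)) + (1 - p) * (bw p A B1 * g (sum c B1)))"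
  proof (rule sum.cong[OF refl])
    fix B1 assume "B1 \<in> Pow A"
    have P: "Pow {a} = {{}, {a}}" by auto
    show "(\<Sum>B2\<in>Pow {a}. bw p A B1 * bw p {a} B2 * g (sum c B1 + sum c B2)) =
      p * (bw p A B1 * g (sum c B1 + c a)) + (1 - p) * (bw p A B1 * g (sum c B1))"
      unfolding P by (simp add: bw_def algebra_simps)
  qed
  also have "\<dots> = p * EE p c A (\<lambda>y. g (y + c a)) + (1 - p) * EE p c A g"
    by (simp add: EE_def sum.distrib sum_distrib_left)
  finally show ?thesis .
qed

lemma EE_mono_g:
  assumes "0 \<le> p" "p \<le> 1" "\<And>y. g y \<le> h y"
  shows "EE p c A g \<le> EE p c A h"
  unfolding EE_def using assms bw_nonneg[OF assms(1,2)]
  by (intro sum_mono mult_left_mono) auto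

lemma EE_add: "EE p c A (\<lambda>y. g y + h y) = EE p c A g + EE p c A h"
  by (simp add: EE_def sum.distrib algebra_simps)

lemma EE_cmult: "EE p c A (\<lambda>y. k * g y) = k * EE p c A g"
  by (simp add: EE_def sum_distrib_left algebra_simps)

lemma EE_const:
  assumes "finite A" shows "EE p c A (\<lambda>_. k) = k"
  using assms by (induction A rule: finite_induct) (simp_all add: EE_insert algebra_simps)

lemma EE_nonneg:
  assumes "0 \<le> p" "p \<le> 1" "\<And>y. 0 \<le> g y" shows "0 \<le> EE p c A g"
  unfolding EE_def using assms bw_nonneg[OF assms(1,2)] by (intro sum_nonneg mult_nonneg_nonneg) auto

lemma EE_le1:
  assumes "finite A" "0 \<le> p" "p \<le> 1" "\<And>y. g y \<le> 1" shows "EE p c A g \<le> 1"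
  using EE_mono_g[OF assms(2,3), of g "\<lambda>_. 1" c A] assms EE_const[OF assms(1), of p c 1] by simp

lemma thr_nonneg: "0 \<le> thr s y" and thr_le1: "thr s y \<le> 1"
  by (auto simp: thr_def)

lemma EE_cong: "(\<And>i. i \<in> A \<Longrightarrow> c i = c' i) \<Longrightarrow> EE p c A g = EE p c' A g"
  unfolding EE_def by (intro sum.cong refl arg_cong2[where f="(*)"] arg_cong[where f=g] sum.cong) auto

lemma EE_var:
  assumes "finite A"
  shows "EE p c A (\<lambda>y. (y + d)^2) = (d + p * sum c A)^2 + p * (1 - p) * (\<Sum>i\<in>A. (c i)^2)"
  using assms
proof (induction A arbitrary: d rule: finite_induct)
  case empty then show ?case by simp
next
  case (insert a A)
  have "EE p c (insert a A) (\<lambda>y. (y + d)^2) = p * EE p c A (\<lambda>y. (y + (c a + d))^2) + (1 - p) * EE p c A (\<lambda>y. (y + d)^2)"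
    using EE_insert[OF insert(1,2)] by (simp add: algebra_simps)
  also have "\<dots> = p * ((c a + d + p * sum c A)^2 + p * (1 - p) * (\<Sum>i\<in>A. (c i)^2))
       + (1 - p) * ((d + p * sum c A)^2 + p * (1 - p) * (\<Sum>i\<in>A. (c i)^2))"
    using insert(3) by simp
  also have "\<dots> = (d + p * sum c (insert a A))^2 + p * (1 - p) * (\<Sum>i\<in>insert a A. (c i)^2)"
    using insert(1,2) by (simp add: power2_eq_square algebra_simps)
  finally show ?case .
qed

lemma EE_zero_p:
  assumes "finite A" shows "EE 0 c A g = g 0"
  using assms by (induction A arbitrary: g rule: finite_induct) (simp_all add: EE_insert)

lemma EE_mono_p:
  assumes "finite A" "0 \<le> p" "p \<le> q" "q \<le> 1" "\<And>i. i \<in> A \<Longrightarrow> 0 \<le> c i"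
    "\<And>x y. x \<le> y \<Longrightarrow> g x \<le> g y"
  shows "EE p c A g \<le> EE q c A g"
  using assms(1,5,6)
proof (induction A arbitrary: g rule: finite_induct)
  case empty then show ?case by simp
next
  case (insert a A)
  let ?ga = "\<lambda>y. g (y + c a)"
  have m1: "\<And>x y. x \<le> y \<Longrightarrow> ?ga x \<le> ?ga y" using insert(5) by simp
  have i1: "EE p c A ?ga \<le> EE q c A ?ga"
    using insert(3)[OF _ m1] insert(4) by simp
  have i2: "EE p c A g \<le> EE q c A g"
    using insert(3)[OF _ insert(5)] insert(4) by simp
  have ca: "0 \<le> c a" using insert(4) by simp
  have i3: "EE q c A g \<le> EE q c A ?ga"
    using assms(2-4) by (intro EE_mono_g insert(5)) (use ca in auto)
  have "EE p c (insert a A) g = p * EE p c A ?ga + (1 - p) * EE p c A g"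
    using EE_insert[OF insert(1,2)] .
  also have "\<dots> \<le> p * EE q c A ?ga + (1 - p) * EE q c A g"
    using assms(2-4) i1 i2 by (intro add_mono mult_left_mono) auto
  also have "\<dots> \<le> q * EE q c A ?ga + (1 - q) * EE q c A g"
  proof -
    have "0 \<le> (q - p) * (EE q c A ?ga - EE q c A g)"
      using assms(3) i3 by (intro mult_nonneg_nonneg) auto
    then show ?thesis by (simp add: algebra_simps)
  qed
  also have "\<dots> = EE q c (insert a A) g"
    using EE_insert[OF insert(1,2)] by simp
  finally show ?case .
qed

lemma isCont_EE: "isCont (\<lambda>p. EE p c A g) x"
proof -
  have *: "isCont (\<lambda>p. if i \<in> B then p else 1 - p) x" for i B
    by (cases "i \<in> B") (auto intro!: continuous_intros)
  show ?thesis unfolding EE_def bw_def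
    by (intro continuous_intros *)
qed

lemma EE_split_bound:
  assumes "finite A1" "finite A2" "A1 \<inter> A2 = {}" "0 \<le> p" "p \<le> 1"
    "\<And>a b. g (a + b) \<le> g1 a + g2 b"
  shows "EE p c (A1 \<union> A2) g \<le> EE p c A1 g1 + EE p c A2 g2"
proof -
  have "EE p c (A1 \<union> A2) g =
    (\<Sum>B1\<in>Pow A1. \<Sum>B2\<in>Pow A2. bw p A1 B1 * bw p A2 B2 * g (sum c B1 + sum c B2))"
    by (rule EE_split[OF assms(1-3)])
  also have "\<dots> \<le> (\<Sum>B1\<in>Pow A1. \<Sum>B2\<in>Pow A2. bw p A1 B1 * bw p A2 B2 * (g1 (sum c B1) + g2 (sum c B2)))"
    using bw_nonneg[OF assms(4,5)] assms(6)
    by (intro sum_mono mult_left_mono) (auto intro: mult_nonneg_nonneg)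
  also have "\<dots> = (\<Sum>B1\<in>Pow A1. bw p A1 B1 * g1 (sum c B1) * (\<Sum>B2\<in>Pow A2. bw p A2 B2))
     + (\<Sum>B1\<in>Pow A1. bw p A1 B1 * (\<Sum>B2\<in>Pow A2. bw p A2 B2 * g2 (sum c B2)))"
    by (simp add: sum.distrib sum_distrib_left sum_distrib_right algebra_simps)
  also have "(\<Sum>B2\<in>Pow A2. bw p A2 B2) = 1"
    using EE_const[OF assms(2), of p c 1] by (simp add: EE_def)
  also have "(\<Sum>B1\<in>Pow A1. bw p A1 B1) = 1"
    using EE_const[OF assms(1), of p c 1] by (simp add: EE_def)
  then have "(\<Sum>B1\<in>Pow A1. bw p A1 B1 * (\<Sum>B2\<in>Pow A2. bw p A2 B2 * g2 (sum c B2))) = EE p c A2 g2"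
    by (simp add: EE_def sum_distrib_right[symmetric])
  finally show ?thesis by (simp add: EE_def)
qed

lemma EE_zero_weights:
  assumes "finite A" "finite Z" "A \<inter> Z = {}" "\<And>i. i \<in> Z \<Longrightarrow> c i = 0"
  shows "EE p c (A \<union> Z) g = EE p c A g"
proof -
  have "EE p c (A \<union> Z) g = (\<Sum>B1\<in>Pow A. \<Sum>B2\<in>Pow Z. bw p A B1 * bw p Z B2 * g (sum c B1 + sum c B2))"
    by (rule EE_split[OF assms(1-3)])
  also have "\<dots> = (\<Sum>B1\<in>Pow A. bw p A B1 * g (sum c B1) * (\<Sum>B2\<in>Pow Z. bw p Z B2))"
  proof (rule sum.cong[OF refl])
    fix B1 assume "B1 \<in> Pow A"
    have "\<And>B2. B2 \<in> Pow Z \<Longrightarrow> sum c B2 = 0" using assms(4) by (auto intro!: sum.neutral)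
    then show "(\<Sum>B2\<in>Pow Z. bw p A B1 * bw p Z B2 * g (sum c B1 + sum c B2)) = bw p A B1 * g (sum c B1) * (\<Sum>B2\<in>Pow Z. bw p Z B2)"
      by (simp add: sum_distrib_left algebra_simps)
  qed
  also have "(\<Sum>B2\<in>Pow Z. bw p Z B2) = 1"
    using EE_const[OF assms(2), of p c 1] by (simp add: EE_def)
  finally show ?thesis by (simp add: EE_def)
qed

lemma EE_limsup:
  assumes A: "finite A" and q: "q \<longlonglongrightarrow> p" "\<And>k. 0 \<le> q k \<and> q k \<le> 1"
    and cs: "\<And>i. (\<lambda>k. cs k i) \<longlonglongrightarrow> c i"
    and s: "s \<longlonglongrightarrow> s0" and eta: "0 < \<eta>" and e: "0 < \<epsilon>"
  shows "eventually (\<lambda>k. EE (q k) (cs k) A (thr (s k)) \<le> EE p c A (thr (s0 - \<eta>)) + \<epsilon>) sequentially"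
proof -
  have fP: "finite (Pow A)" using A by simp
  have ev1: "eventually (\<lambda>k. \<forall>B\<in>Pow A. thr (s k) (sum (cs k) B) \<le> thr (s0 - \<eta>) (sum c B)) sequentially"
  proof (rule eventually_ball_finite[OF fP], rule ballI)
    fix B assume "B \<in> Pow A"
    show "eventually (\<lambda>k. thr (s k) (sum (cs k) B) \<le> thr (s0 - \<eta>) (sum c B)) sequentially"
    proof (cases "s0 - \<eta> \<le> sum c B")
      case True then show ?thesis by (simp add: thr_def)
    next
      case False
      have "((\<lambda>k. sum (cs k) B - s k) \<longlongrightarrow> sum c B - s0) sequentially"
        by (intro tendsto_intros cs s)
      moreover have "sum c B - s0 < 0" using False eta by simp
      ultimately have "eventually (\<lambda>k. sum (cs k) B - s k < 0) sequentially"
        by (rule order_tendstoD)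
      then show ?thesis by eventually_elim (auto simp: thr_def)
    qed
  qed
  have "((\<lambda>k. EE (q k) c A (thr (s0 - \<eta>))) \<longlongrightarrow> EE p c A (thr (s0 - \<eta>))) sequentially"
    using isCont_tendsto_compose[OF isCont_EE q(1)] .
  then have ev2: "eventually (\<lambda>k. EE (q k) c A (thr (s0 - \<eta>)) < EE p c A (thr (s0 - \<eta>)) + \<epsilon>) sequentially"
    using e by (intro order_tendstoD) auto
  show ?thesis
    using ev1 ev2
  proof eventually_elim
    case (elim k)
    have "EE (q k) (cs k) A (thr (s k)) \<le> EE (q k) c A (thr (s0 - \<eta>))"
      unfolding EE_def using elim(1) bw_nonneg[of "q k"] q(2)[of k]
      by (intro sum_mono mult_left_mono) auto
    then show ?case using elim(2) by simp
  qed
qed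

lemma EE_thr_left:
  assumes "finite A"
  shows "eventually (\<lambda>s. EE p c A (thr s) = EE p c A (thr t)) (at_left t)"
proof -
  have "eventually (\<lambda>s. \<forall>B\<in>Pow A. thr s (sum c B) = thr t (sum c B)) (at_left t)"
  proof (rule eventually_ball_finite, use assms in simp, rule ballI)
    fix B assume "B \<in> Pow A"
    show "eventually (\<lambda>s. thr s (sum c B) = thr t (sum c B)) (at_left t)"
    proof (cases "t \<le> sum c B")
      case True
      have "eventually (\<lambda>s. s < t) (at_left t)" by (simp add: eventually_at_filter)
      then show ?thesis by eventually_elim (use True in \<open>auto simp: thr_def\<close>)
    next
      case False
      then have "eventually (\<lambda>s. s \<in> {sum c B<..<t}) (at_left t)"
        by (intro eventually_at_left_real) simp
      then show ?thesis by eventually_elim (use False in \<open>auto simp: thr_def\<close>)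
    qed
  qed
  then show ?thesis
    by eventually_elim (simp add: EE_def)
qed

definition sep :: "(nat \<Rightarrow> real) \<Rightarrow> nat set \<Rightarrow> real \<Rightarrow> bool" where
  "sep c F L \<longleftrightarrow> (\<forall>B1. \<forall>B2. B1 \<subseteq> F \<longrightarrow> B2 \<subseteq> F \<longrightarrow> B1 \<noteq> B2 \<longrightarrow> L \<le> \<bar>sum c B1 - sum c B2\<bar>)"

lemma sum_remove_j:
  fixes c :: "nat \<Rightarrow> real"
  assumes "finite F" "B \<subseteq> insert j F"
  shows "sum c B = sum c (B - {j}) + (if j \<in> B then c j else 0)"
proof -
  have "finite B" using assms finite_subset by auto
  show ?thesis
  proof (cases "j \<in> B")
    case True
    have "sum c B = c j + sum c (B - {j})" by (rule sum.remove[OF \<open>finite B\<close> True])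
    moreover have "(if j \<in> B then c j else 0) = c j" using True by simp
    ultimately show ?thesis by linarith
  next
    case False
    then have "B - {j} = B" by simp
    then show ?thesis using False by simp
  qed
qed

lemma sep_insert:
  assumes F: "finite F" and s: "sep c F L" and j: "j \<notin> F" "0 < c j" "c j \<le> L / 2"
  shows "sep c (insert j F) (c j)"
  unfolding sep_def
proof (intro allI impI)
  fix B1 B2 assume B: "B1 \<subseteq> insert j F" "B2 \<subseteq> insert j F" "B1 \<noteq> B2"
  let ?B1 = "B1 - {j}" and ?B2 = "B2 - {j}"
  have sub: "?B1 \<subseteq> F" "?B2 \<subseteq> F" using B by auto
  have e1: "sum c B1 = sum c ?B1 + (if j \<in> B1 then c j else 0)" using sum_remove_j[OF F B(1)] .
  have e2: "sum c B2 = sum c ?B2 + (if j \<in> B2 then c j else 0)" using sum_remove_j[OF F B(2)] .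
  have sepF: "?B1 \<noteq> ?B2 \<Longrightarrow> L \<le> \<bar>sum c ?B1 - sum c ?B2\<bar>" using s sub unfolding sep_def by blast
  show "c j \<le> \<bar>sum c B1 - sum c B2\<bar>"
  proof (cases "?B1 = ?B2")
    case True
    then have "j \<in> B1 \<longleftrightarrow> j \<notin> B2" using B(3) by blast
    then show ?thesis using e1 e2 True j by auto
  next
    case False
    define d where "d = sum c ?B1 - sum c ?B2"
    define e where "e = (if j \<in> B1 then c j else 0) - (if j \<in> B2 then c j else 0)"
    have D: "L \<le> \<bar>d\<bar>" using sepF False unfolding d_def by blast
    have E: "\<bar>e\<bar> \<le> c j" using j unfolding e_def by auto
    have S: "sum c B1 - sum c B2 = d + e" unfolding d_def e_def using e1 e2 by simp
    have "\<bar>d\<bar> \<le> \<bar>d + e\<bar> + \<bar>- e\<bar>" using abs_triangle_ineq[of "d + e" "- e"] by simp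
    then show ?thesis using D E S j(3) by simp
  qed
qed

lemma sep_exists:
  assumes pos: "\<And>i. 0 < c i" and lim: "c \<longlonglongrightarrow> 0"
  shows "\<exists>F L. finite F \<and> card F = N \<and> 0 < L \<and> sep c F L"
proof (induction N)
  case 0
  show ?case by (rule exI[of _ "{}"], rule exI[of _ 1]) (auto simp: sep_def)
next
  case (Suc N)
  then obtain F L where FL: "finite F" "card F = N" "0 < L" "sep c F L" by blast
  obtain m where m: "F \<subseteq> {..<m}" using FL(1) finite_nat_bounded by blast
  have "eventually (\<lambda>j. c j < L / 2) sequentially"
    using lim FL(3) by (intro order_tendstoD) auto
  moreover have "eventually (\<lambda>j. m \<le> j) sequentially" by (rule eventually_ge_at_top)
  ultimately have "eventually (\<lambda>j. c j < L / 2 \<and> m \<le> j) sequentially" by (rule eventually_conj)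
  then obtain j where j: "c j < L / 2" "m \<le> j" using eventually_sequentially by auto
  have jF: "j \<notin> F" using m j by auto
  have "sep c (insert j F) (c j)" using sep_insert[OF FL(1) FL(4) jF pos[of j]] j by simp
  then show ?case using FL jF pos[of j] by (intro exI[of _ "insert j F"] exI[of _ "c j"]) auto
qed

lemma bw_le_pow:
  assumes "0 \<le> p" "p \<le> 1" shows "bw p F B \<le> max p (1 - p) ^ card F"
proof -
  have "bw p F B \<le> (\<Prod>i\<in>F. max p (1 - p))"
    unfolding bw_def using assms by (intro prod_mono) auto
  then show ?thesis by simp
qed

lemma sep_sum_bound:
  assumes F: "finite F" and s: "sep c F L" and l: "lw \<le> L" and p: "0 \<le> p" "p \<le> 1"
  shows "(\<Sum>B\<in>Pow F. bw p F B * (if x \<le> sum c B \<and> sum c B < x + lw then 1 else 0)) \<le> max p (1 - p) ^ card F"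
proof (cases "\<exists>B0\<in>Pow F. x \<le> sum c B0 \<and> sum c B0 < x + lw")
  case False
  then have "(\<Sum>B\<in>Pow F. bw p F B * (if x \<le> sum c B \<and> sum c B < x + lw then 1 else 0)) = 0"
    by (intro sum.neutral) auto
  then show ?thesis by simp
next
  case True
  then obtain B0 where B0: "B0 \<in> Pow F" "x \<le> sum c B0" "sum c B0 < x + lw" by blast
  have uniq: "B = B0" if "B \<in> Pow F" "x \<le> sum c B" "sum c B < x + lw" for B
  proof (rule ccontr)
    assume "B \<noteq> B0"
    then have "L \<le> \<bar>sum c B - sum c B0\<bar>" using s that(1) B0(1) unfolding sep_def by blast
    moreover have "\<bar>sum c B - sum c B0\<bar> < lw" using that B0 by (simp add: abs_less_iff)
    ultimately show False using l by simp
  qed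
  have "(\<Sum>B\<in>Pow F. bw p F B * (if x \<le> sum c B \<and> sum c B < x + lw then 1 else 0))
      = (\<Sum>B\<in>Pow F. if B = B0 then bw p F B else 0)"
  proof (intro sum.cong refl)
    fix B assume BF: "B \<in> Pow F"
    show "bw p F B * (if x \<le> sum c B \<and> sum c B < x + lw then 1 else 0) = (if B = B0 then bw p F B else 0)"
    proof (cases "B = B0")
      case True then show ?thesis using B0 by simp
    next
      case False
      then have "\<not> (x \<le> sum c B \<and> sum c B < x + lw)" using uniq[OF BF] by blast
      then have "(if x \<le> sum c B \<and> sum c B < x + lw then 1 else (0::real)) = 0" by (simp only: if_False)
      then show ?thesis using False by simp
    qed
  qed
  also have "\<dots> = bw p F B0" using B0(1) F by (simp add: sum.delta)
  also have "\<dots> \<le> max p (1 - p) ^ card F" by (rule bw_le_pow[OF p])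
  finally show ?thesis .
qed

lemma EE_atom:
  assumes A: "finite A" and FA: "F \<subseteq> A" and s: "sep c F L" and l: "lw \<le> L"
    and p: "0 \<le> p" "p \<le> 1"
  shows "EE p c A (\<lambda>y. if x \<le> y \<and> y < x + lw then 1 else 0) \<le> max p (1 - p) ^ card F"
proof -
  let ?m = "max p (1 - p) ^ card F"
  have F: "finite F" using A FA finite_subset by auto
  have A': "finite (A - F)" using A by simp
  have AU: "A = F \<union> (A - F)" using FA by auto
  let ?I = "\<lambda>y. if x \<le> y \<and> y < x + lw then 1 else (0::real)"
  let ?J = "\<lambda>B1 B2. if (x - sum c B2) \<le> sum c B1 \<and> sum c B1 < (x - sum c B2) + lw then 1 else (0::real)"
  have eqI: "\<And>a b. ?I (a + b) = (if x - b \<le> a \<and> a < x - b + lw then 1 else 0)" by auto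
  have E0: "EE p c A ?I = (\<Sum>B1\<in>Pow F. \<Sum>B2\<in>Pow (A - F). bw p F B1 * bw p (A - F) B2 * ?I (sum c B1 + sum c B2))"
    using EE_split[OF F A', of p c ?I] AU by simp
  also have "\<dots> = (\<Sum>B2\<in>Pow (A - F). \<Sum>B1\<in>Pow F. bw p F B1 * bw p (A - F) B2 * ?I (sum c B1 + sum c B2))"
    by (rule sum.swap)
  also have "\<dots> = (\<Sum>B2\<in>Pow (A - F). \<Sum>B1\<in>Pow F. bw p (A - F) B2 * (bw p F B1 * ?J B1 B2))"
    unfolding eqI by (intro sum.cong refl) (simp only: mult.commute mult.left_commute)
  also have "\<dots> = (\<Sum>B2\<in>Pow (A - F). bw p (A - F) B2 * (\<Sum>B1\<in>Pow F. bw p F B1 * ?J B1 B2))"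
    by (simp only: sum_distrib_left)
  also have "\<dots> \<le> (\<Sum>B2\<in>Pow (A - F). bw p (A - F) B2 * ?m)"
    using sep_sum_bound[OF F s l p] bw_nonneg[OF p]
    by (intro sum_mono mult_left_mono) auto
  also have "\<dots> = ?m * (\<Sum>B2\<in>Pow (A - F). bw p (A - F) B2)"
    by (simp only: sum_distrib_left mult.commute)
  also have "(\<Sum>B2\<in>Pow (A - F). bw p (A - F) B2) = 1"
    using EE_const[OF A', of p c 1] by (simp add: EE_def)
  finally show ?thesis by (simp only: mult_1_right)
qed



lemma bern_prob: "prob_space (bern_space p)"
  unfolding bern_space_def by (intro prob_space_PiM prob_space_measure_pmf)

lemma space_bern: "space (bern_space p) = UNIV"
  by (auto simp: bern_space_def space_PiM PiE_def extensional_def)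

lemma link:
  fixes P :: "real \<Rightarrow> bool"
  assumes A: "finite A" and p: "0 \<le> p" "p \<le> 1"
  shows "{\<omega> \<in> space (bern_space p). P (\<Sum>i\<in>A. c i * (if \<omega> i then 1 else 0))} \<in> sets (bern_space p)"
    and "measure (bern_space p) {\<omega> \<in> space (bern_space p). P (\<Sum>i\<in>A. c i * (if \<omega> i then 1 else 0))}
         = EE p c A (\<lambda>y. if P y then 1 else 0)"
proof -
  let ?M = "\<lambda>_::nat. measure_pmf (bernoulli_pmf p)"
  interpret PP: product_prob_space ?M UNIV
    by (simp add: product_prob_space_def product_prob_space_axioms_def product_sigma_finite_def
        prob_space_measure_pmf prob_space_imp_sigma_finite)
  define X where "X B = prod_emb UNIV ?M A (PiE A (\<lambda>i. {i \<in> B}))" for B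
  have Xs: "X B \<in> sets (bern_space p)" for B
    unfolding X_def bern_space_def using A by (intro sets_PiM_I) auto
  have memX: "\<omega> \<in> X B \<longleftrightarrow> (\<forall>i\<in>A. \<omega> i = (i \<in> B))" for \<omega> B
    unfolding X_def prod_emb_iff by (auto simp: extensional_def PiE_iff)
  have sumeq: "(\<Sum>i\<in>A. c i * (if \<omega> i then 1 else 0)) = sum c {i\<in>A. \<omega> i}" for \<omega>
    using A by (simp add: sum.inter_filter if_distrib cong: if_cong)
  define S where "S = {B \<in> Pow A. P (sum c B)}"
  have E: "{\<omega> \<in> space (bern_space p). P (\<Sum>i\<in>A. c i * (if \<omega> i then 1 else 0))} = (\<Union>B\<in>S. X B)"
  proof (intro set_eqI iffI)
    fix \<omega> assume "\<omega> \<in> {\<omega> \<in> space (bern_space p). P (\<Sum>i\<in>A. c i * (if \<omega> i then 1 else 0))}"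
    then have "P (sum c {i\<in>A. \<omega> i})" by (simp add: sumeq)
    then have "{i\<in>A. \<omega> i} \<in> S" "\<omega> \<in> X {i\<in>A. \<omega> i}" by (auto simp: S_def memX)
    then show "\<omega> \<in> (\<Union>B\<in>S. X B)" by blast
  next
    fix \<omega> assume "\<omega> \<in> (\<Union>B\<in>S. X B)"
    then obtain B where B: "B \<in> S" "\<omega> \<in> X B" by blast
    then have "{i\<in>A. \<omega> i} = B" by (auto simp: S_def memX)
    then show "\<omega> \<in> {\<omega> \<in> space (bern_space p). P (\<Sum>i\<in>A. c i * (if \<omega> i then 1 else 0))}"
      using B by (simp add: sumeq space_bern S_def)
  qed
  have fS: "finite S" using A by (simp add: S_def)
  show "{\<omega> \<in> space (bern_space p). P (\<Sum>i\<in>A. c i * (if \<omega> i then 1 else 0))} \<in> sets (bern_space p)"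
    unfolding E using fS Xs by auto
  have disj: "disjoint_family_on X S"
    unfolding disjoint_family_on_def
  proof (intro ballI impI)
    fix B B' assume "B \<in> S" "B' \<in> S" "B \<noteq> B'"
    then show "X B \<inter> X B' = {}" by (auto simp: S_def memX)
  qed
  have mX: "measure (bern_space p) (X B) = bw p A B" for B
  proof -
    have "measure (bern_space p) (X B) = (\<Prod>i\<in>A. measure (?M i) {i \<in> B})"
      unfolding X_def bern_space_def using A by (intro PP.measure_PiM_emb) auto
    also have "\<dots> = bw p A B"
      unfolding bw_def using p by (intro prod.cong refl) (auto simp: measure_pmf_single)
    finally show ?thesis .
  qed
  have "measure (bern_space p) (\<Union>B\<in>S. X B) = (\<Sum>B\<in>S. measure (bern_space p) (X B))"
    using fS Xs disj by (intro measure_finite_Union) (auto simp: bern_space_def)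
  also have "\<dots> = (\<Sum>B\<in>S. bw p A B)" by (simp add: mX)
  also have "\<dots> = (\<Sum>B\<in>Pow A. if P (sum c B) then bw p A B else 0)"
    unfolding S_def using A by (intro sum.inter_filter) simp
  also have "\<dots> = EE p c A (\<lambda>y. if P y then 1 else 0)"
    unfolding EE_def by (intro sum.cong refl) simp
  finally show "measure (bern_space p) {\<omega> \<in> space (bern_space p). P (\<Sum>i\<in>A. c i * (if \<omega> i then 1 else 0))}
         = EE p c A (\<lambda>y. if P y then 1 else 0)" unfolding E .
qed

lemma thr_eq: "(\<lambda>y. if s \<le> y then 1 else 0) = thr s"
  by (simp add: thr_def fun_eq_iff)

definition Gset :: "real \<Rightarrow> real \<Rightarrow> real set" where
  "Gset t p = {EE p c {..<n} (thr t) | c n. stake_seq c \<and> (\<forall>i\<ge>n. c i = 0)}"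

definition Gf :: "real \<Rightarrow> real \<Rightarrow> real" where
  "Gf t p = Sup (Gset t p)"

definition d0 :: "nat \<Rightarrow> real" where "d0 i = (if i = 0 then 1 else 0)"

lemma stake_d0: "stake_seq d0"
proof -
  have "d0 sums d0 0" unfolding d0_def using sums_single[of 0 "\<lambda>_. 1::real"] by simp
  then show ?thesis unfolding stake_seq_def d0_def by (auto simp: decseq_def)
qed

lemma Gset_mem: "EE p d0 {..<1} (thr t) \<in> Gset t p"
  unfolding Gset_def mem_Collect_eq
  by (intro exI[of _ d0] exI[of _ "1::nat"]) (simp add: stake_d0 d0_def)

lemma Gset_ne: "Gset t p \<noteq> {}"
  using Gset_mem by blast

lemma Gset_bdd: "0 \<le> p \<Longrightarrow> p \<le> 1 \<Longrightarrow> bdd_above (Gset t p)"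
  unfolding Gset_def bdd_above_def by (auto intro!: exI[of _ 1] EE_le1 thr_le1)

lemma Gf_upper:
  assumes "0 \<le> p" "p \<le> 1" "stake_seq c" "\<forall>i\<ge>n. c i = 0"
  shows "EE p c {..<n} (thr t) \<le> Gf t p"
  unfolding Gf_def using assms by (intro cSup_upper Gset_bdd) (auto simp: Gset_def)

lemma Gf_d0:
  assumes "0 \<le> p" "p \<le> 1" shows "EE p d0 {..<1} (thr t) \<le> Gf t p"
  using Gf_upper[OF assms stake_d0, of 1] by (simp add: d0_def)

lemma Gf_nonneg:
  assumes "0 \<le> p" "p \<le> 1" shows "0 \<le> Gf t p"
  using Gf_d0[OF assms, of t] EE_nonneg[OF assms, of "thr t" d0 "{..<1}"] thr_nonneg by force

lemma Gf_one: "t \<le> 1 \<Longrightarrow> Gf t 1 \<ge> 1"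
  using Gf_d0[of 1 t] by (simp add: lessThan_Suc EE_insert d0_def thr_def)

lemma Gf_mono:
  assumes "0 \<le> q" "q \<le> p" "p \<le> 1"
  shows "Gf t q \<le> Gf t p"
  unfolding Gf_def[of t q]
proof (rule cSup_least[OF Gset_ne])
  fix x assume "x \<in> Gset t q"
  then obtain c n where x: "x = EE q c {..<n} (thr t)" "stake_seq c" "\<forall>i\<ge>n. c i = 0"
    by (auto simp: Gset_def)
  have "x \<le> EE p c {..<n} (thr t)"
    unfolding x(1) using assms x(2) by (intro EE_mono_p) (auto simp: stake_seq_def thr_def)
  also have "\<dots> \<le> Gf t p" using Gf_upper[OF _ assms(3) x(2,3)] assms by simp
  finally show "x \<le> Gf t p" .
qed

lemma thr_anti: "b \<le> a \<Longrightarrow> thr a y \<le> thr b y"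
  by (simp add: thr_def)

lemma Gf_normalize:
  assumes p: "0 \<le> p" "p \<le> 1" and c: "\<And>i. 0 \<le> c i" "decseq c"
    and S: "0 < sum c {..<N}" and a: "t * sum c {..<N} \<le> a"
  shows "EE p c {..<N} (thr a) \<le> Gf t p"
proof -
  define S where "S = sum c {..<N}"
  define c' where "c' i = (if i < N then c i / S else 0)" for i
  have Sp: "0 < S" using S by (simp add: S_def)
  have "c' sums (sum c' {..<N})" by (rule sums_finite) (auto simp: c'_def)
  moreover have "sum c' {..<N} = 1"
    using Sp by (simp add: c'_def sum_divide_distrib[symmetric] S_def)
  ultimately have sums: "c' sums 1" by simp
  have dec: "decseq c'"
    unfolding decseq_def c'_def using c(2) Sp
    by (auto simp: decseq_def divide_right_mono c(1) intro: divide_nonneg_pos)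
  have st: "stake_seq c'" unfolding stake_seq_def using sums dec c(1) Sp
    by (auto simp: c'_def)
  have "EE p c {..<N} (thr a) \<le> EE p c {..<N} (thr (t * S))"
    using p a by (intro EE_mono_g thr_anti) (auto simp: S_def)
  also have "\<dots> = EE p c' {..<N} (thr t)"
    unfolding EE_def
  proof (intro sum.cong refl arg_cong2[where f="(*)"])
    fix B assume "B \<in> Pow {..<N}"
    then have "sum c' B = sum c B / S" by (auto simp: c'_def sum_divide_distrib intro!: sum.cong)
    then show "thr (t * S) (sum c B) = thr t (sum c' B)"
      using Sp by (simp add: thr_def pos_le_divide_eq)
  qed
  also have "\<dots> \<le> Gf t p" using Gf_upper[OF p st] by (simp add: c'_def)
  finally show ?thesis .
qed

lemma stake_fin:
  assumes "\<forall>i\<ge>n. c i = 0"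
  shows "stake_sum c \<omega> = (\<Sum>i\<in>{..<n}. c i * (if \<omega> i then 1 else 0))"
  unfolding stake_sum_def using assms by (intro suminf_finite) auto

lemma stake_basic:
  assumes "stake_seq c"
  shows "summable c" "suminf c = 1" "\<And>i. 0 \<le> c i" "sum c {..<M} \<le> 1"
proof -
  show "summable c" "suminf c = 1" "\<And>i. 0 \<le> c i"
    using assms by (auto simp: stake_seq_def sums_iff)
  then show "sum c {..<M} \<le> 1" using sum_le_suminf[of c "{..<M}"] by auto
qed

lemma stake_tail:
  assumes st: "stake_seq c"
  shows "stake_sum c \<omega> \<le> (\<Sum>i<M. c i * (if \<omega> i then 1 else 0)) + (1 - (\<Sum>i<M. c i))"
proof -
  note b = stake_basic[OF st]
  define f where "f i = c i * (if \<omega> i then 1 else (0::real))" for i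
  have fle: "f i \<le> c i" "0 \<le> f i" for i using b(3)[of i] by (auto simp: f_def)
  have sf: "summable f" by (rule summable_comparison_test'[OF b(1), of 0]) (use fle in auto)
  have "suminf f = (\<Sum>j. f (j + M)) + sum f {..<M}" by (rule suminf_split_initial_segment[OF sf])
  moreover have "suminf c = (\<Sum>j. c (j + M)) + sum c {..<M}" by (rule suminf_split_initial_segment[OF b(1)])
  moreover have "(\<Sum>j. f (j + M)) \<le> (\<Sum>j. c (j + M))"
    using fle sf b(1) by (intro suminf_le) (auto simp: summable_iff_shift)
  ultimately show ?thesis using b(2) unfolding stake_sum_def f_def[symmetric] by simp
qed

lemma measure_le_EE:
  assumes st: "stake_seq c" and p: "0 \<le> p" "p \<le> 1"
  shows "measure (bern_space p) {\<omega> \<in> space (bern_space p). t \<le> stake_sum c \<omega>}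
     \<le> EE p c {..<M} (thr (t - (1 - (\<Sum>i<M. c i))))"
proof -
  interpret prob_space "bern_space p" by (rule bern_prob)
  let ?E = "{\<omega> \<in> space (bern_space p). t - (1 - (\<Sum>i<M. c i)) \<le> (\<Sum>i\<in>{..<M}. c i * (if \<omega> i then 1 else 0))}"
  have Es: "?E \<in> sets (bern_space p)" using link(1)[of "{..<M}" p "\<lambda>y. t - (1 - (\<Sum>i<M. c i)) \<le> y" c] p by simp
  have mE: "measure (bern_space p) ?E = EE p c {..<M} (thr (t - (1 - (\<Sum>i<M. c i))))"
    using link(2)[of "{..<M}" p "\<lambda>y. t - (1 - (\<Sum>i<M. c i)) \<le> y" c] p by (simp add: thr_eq)
  have sub: "{\<omega> \<in> space (bern_space p). t \<le> stake_sum c \<omega>} \<subseteq> ?E"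
  proof
    fix \<omega> assume w: "\<omega> \<in> {\<omega> \<in> space (bern_space p). t \<le> stake_sum c \<omega>}"
    have "stake_sum c \<omega> \<le> (\<Sum>i<M. c i * (if \<omega> i then 1 else 0)) + (1 - (\<Sum>i<M. c i))"
      by (rule stake_tail[OF st])
    then have "t - (1 - (\<Sum>i<M. c i)) \<le> (\<Sum>i\<in>{..<M}. c i * (if \<omega> i then 1 else 0))"
      using w by simp
    then show "\<omega> \<in> ?E" using w by simp
  qed
  show ?thesis
  proof (cases "{\<omega> \<in> space (bern_space p). t \<le> stake_sum c \<omega>} \<in> sets (bern_space p)")
    case True
    then show ?thesis using finite_measure_mono[OF sub Es] mE by simp
  next
    case False
    then show ?thesis using measure_notin_sets[OF False] mE measure_nonneg[of "bern_space p" ?E] by simp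
  qed
qed

lemma infinite_bound:
  assumes t: "0 < t" "t \<le> 1" and p: "0 \<le> p" "p \<le> 1"
    and st: "stake_seq c" and pos: "\<And>i. 0 < c i"
  shows "measure (bern_space p) {\<omega> \<in> space (bern_space p). t \<le> stake_sum c \<omega>} \<le> Gf t p"
proof (rule field_le_epsilon)
  fix \<epsilon> :: real assume e: "0 < \<epsilon>"
  interpret prob_space "bern_space p" by (rule bern_prob)
  note b = stake_basic[OF st]
  define T where "T M = 1 - (\<Sum>i<M. c i)" for M
  have T0: "0 \<le> T M" for M using b(4)[of M] by (simp add: T_def)
  have Tlim: "T \<longlonglongrightarrow> 0"
    unfolding T_def using summable_LIMSEQ[OF b(1)] b(2) by (auto intro: tendsto_eq_intros)
  have clim: "c \<longlonglongrightarrow> 0" by (rule summable_LIMSEQ_zero[OF b(1)])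
  let ?m = "measure (bern_space p) {\<omega> \<in> space (bern_space p). t \<le> stake_sum c \<omega>}"
  have key: "?m \<le> EE p c {..<M} (thr (t - T M))" for M
    using measure_le_EE[OF st p, of t M] by (simp add: T_def)
  consider "p = 0" | "p = 1" | "0 < p" "p < 1" using p by linarith
  then show "?m \<le> Gf t p + \<epsilon>"
  proof cases
    case 1
    have "eventually (\<lambda>M. T M < t) sequentially" using Tlim t by (intro order_tendstoD) auto
    then obtain M where M: "T M < t" using eventually_sequentially by auto
    have "?m \<le> EE p c {..<M} (thr (t - T M))" by (rule key)
    also have "\<dots> = 0" using M 1 by (simp add: EE_zero_p thr_def)
    finally show ?thesis using Gf_nonneg[OF p, of t] e by simp
  next
    case 2
    have "?m \<le> 1" by (simp add: measure_le_1 prob_le_1)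
    then show ?thesis using Gf_one[OF t(2)] 2 e by simp
  next
    case 3
    define m where "m = max p (1 - p)"
    have m1: "m < 1" using 3 by (simp add: m_def)
    obtain Nf where Nf: "m ^ Nf < \<epsilon>" using real_arch_pow_inv[OF e m1] by blast
    obtain F L where FL: "finite F" "card F = Nf" "0 < L" "sep c F L"
      using sep_exists[OF pos clim] by blast
    obtain M0 where M0: "F \<subseteq> {..<M0}" using FL(1) finite_nat_bounded by blast
    have "eventually (\<lambda>M. T M < L) sequentially" using Tlim FL(3) by (intro order_tendstoD) auto
    moreover have "eventually (\<lambda>M. T M < 1) sequentially" using Tlim by (intro order_tendstoD) auto
    moreover have "eventually (\<lambda>M. M0 \<le> M) sequentially" by (rule eventually_ge_at_top)
    ultimately have "eventually (\<lambda>M. T M < L \<and> T M < 1 \<and> M0 \<le> M) sequentially"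
      by eventually_elim auto
    then obtain M where M: "T M < L" "T M < 1" "M0 \<le> M" using eventually_sequentially by auto
    define a where "a = t - T M"
    define b where "b = t * (\<Sum>i<M. c i)"
    define lw where "lw = b - a"
    have Sdef: "(\<Sum>i<M. c i) = 1 - T M" by (simp add: T_def)
    have lweq: "lw = (1 - t) * T M" by (simp add: lw_def a_def b_def Sdef algebra_simps)
    have l1: "0 \<le> (1 - t) * T M" using t T0[of M] by simp
    have l2: "(1 - t) * T M \<le> 1 * T M" using t T0[of M] by (intro mult_right_mono) auto
    have lw0: "0 \<le> lw" and lwL: "lw \<le> L" using l1 l2 lweq M(1) by auto
    have ab: "a \<le> b" using lw0 by (simp add: lw_def)
    have S: "0 < (\<Sum>i<M. c i)" using M(2) by (simp add: T_def)
    have pt: "thr a y \<le> thr b y + (if a \<le> y \<and> y < a + lw then 1 else 0)" for y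
      by (auto simp: thr_def lw_def)
    have "?m \<le> EE p c {..<M} (thr a)" using key[of M] by (simp add: a_def)
    also have "\<dots> \<le> EE p c {..<M} (\<lambda>y. thr b y + (if a \<le> y \<and> y < a + lw then 1 else 0))"
      using p pt by (intro EE_mono_g) auto
    also have "\<dots> = EE p c {..<M} (thr b) + EE p c {..<M} (\<lambda>y. if a \<le> y \<and> y < a + lw then 1 else 0)"
      by (rule EE_add)
    also have "EE p c {..<M} (thr b) \<le> Gf t p"
    proof -
      have dc: "decseq c" using st by (simp add: stake_seq_def)
      show ?thesis by (rule Gf_normalize[OF p b(3) dc S]) (simp add: b_def)
    qed
    also have "EE p c {..<M} (\<lambda>y. if a \<le> y \<and> y < a + lw then 1 else 0) \<le> m ^ card F"
      unfolding m_def using M0 M(3) lwL p by (intro EE_atom[OF _ _ FL(4)]) auto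
    finally show ?thesis using Nf FL(2) by simp
  qed
qed

lemma pi_eq:
  assumes t: "0 < t" "t \<le> 1" and p: "0 \<le> p" "p \<le> 1"
  shows "pi_fun p t = Gf t p"
proof -
  interpret prob_space "bern_space p" by (rule bern_prob)
  define PS where "PS = {measure (bern_space p) {\<omega> \<in> space (bern_space p). stake_sum c \<omega> \<ge> t} | c. stake_seq c}"
  have pf: "pi_fun p t = Sup PS" by (simp add: pi_fun_def PS_def)
  have PSne: "PS \<noteq> {}" using stake_d0 by (auto simp: PS_def)
  have PSb: "bdd_above PS" unfolding PS_def bdd_above_def by (auto intro!: exI[of _ 1])
  have fin: "measure (bern_space p) {\<omega> \<in> space (bern_space p). stake_sum c \<omega> \<ge> t} = EE p c {..<n} (thr t)"
    if "\<forall>i\<ge>n. c i = 0" for c n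
    using link(2)[of "{..<n}" p "\<lambda>y. t \<le> y" c] p stake_fin[OF that] by (simp add: thr_eq)
  show ?thesis
  proof (rule antisym)
    show "pi_fun p t \<le> Gf t p"
      unfolding pf
    proof (rule cSup_least[OF PSne])
      fix x assume "x \<in> PS"
      then obtain c where x: "x = measure (bern_space p) {\<omega> \<in> space (bern_space p). stake_sum c \<omega> \<ge> t}" "stake_seq c"
        by (auto simp: PS_def)
      show "x \<le> Gf t p"
      proof (cases "\<exists>n. \<forall>i\<ge>n. c i = 0")
        case True
        then obtain n where n: "\<forall>i\<ge>n. c i = 0" by blast
        show ?thesis using fin[OF n] x Gf_upper[OF p x(2) n] by simp
      next
        case False
        have pos: "0 < c i" for i
        proof (rule ccontr)
          assume "\<not> 0 < c i"
          then have ci: "c i = 0" using stake_basic(3)[OF x(2), of i] by simp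
          have "\<forall>j\<ge>i. c j = 0"
          proof (intro allI impI)
            fix j assume "i \<le> j"
            then have "c j \<le> c i" using x(2) by (auto simp: stake_seq_def decseq_def)
            then show "c j = 0" using ci stake_basic(3)[OF x(2), of j] by simp
          qed
          then show False using False by blast
        qed
        show ?thesis using infinite_bound[OF t p x(2) pos] x(1) by simp
      qed
    qed
  next
    show "Gf t p \<le> pi_fun p t"
      unfolding Gf_def
    proof (rule cSup_least[OF Gset_ne])
      fix x assume "x \<in> Gset t p"
      then obtain c n where x: "x = EE p c {..<n} (thr t)" "stake_seq c" "\<forall>i\<ge>n. c i = 0"
        by (auto simp: Gset_def)
      have "x \<in> PS" unfolding PS_def mem_Collect_eq
        using fin[OF x(3)] x by (intro exI[of _ c]) simp
      then show "x \<le> pi_fun p t" unfolding pf by (rule cSup_upper[OF _ PSb])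
    qed
  qed
qed



lemma diag:
  fixes \<gamma> :: "nat \<Rightarrow> nat \<Rightarrow> real"
  assumes bd: "\<And>k i. 0 \<le> \<gamma> k i \<and> \<gamma> k i \<le> 1"
  shows "\<exists>r c. strict_mono r \<and> (\<forall>i. (\<lambda>k. \<gamma> (r k) i) \<longlonglongrightarrow> c i)"
proof -
  let ?P = "\<lambda>n. \<lambda>s. convergent (\<lambda>k. \<gamma> (s k) n)"
  interpret nat: subseqs ?P
  proof (unfold convergent_def, unfold subseqs_def, auto)
    fix n :: nat and s :: "nat \<Rightarrow> nat" assume s: "strict_mono s"
    have "\<And>k. \<gamma> (s k) n \<in> {0..1}" using bd by simp
    then have "\<exists>l s'. strict_mono s' \<and> ((\<lambda>k. \<gamma> (s k) n) \<circ> s') \<longlonglongrightarrow> l"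
      using compact_Icc compact_imp_seq_compact seq_compactE by metis
    thus "\<exists>s'. strict_mono (s'::nat\<Rightarrow>nat) \<and> (\<exists>l. (\<lambda>k. \<gamma> (s (s' k)) n) \<longlonglongrightarrow> l)"
      by (auto simp: comp_def)
  qed
  define d where "d = nat.diagseq"
  have subseq: "strict_mono d"
    unfolding d_def using nat.subseq_diagseq by auto
  have rat_cnv: "?P n d" for n
  proof -
    have Pn_seqseq: "?P n (nat.seqseq (Suc n))"
      by (rule nat.seqseq_holds)
    have 1: "(\<lambda>k. \<gamma> ((nat.seqseq (Suc n) \<circ> (\<lambda>k. nat.fold_reduce (Suc n) k
      (Suc n + k))) k) n) = (\<lambda>k. \<gamma> (nat.seqseq (Suc n) k) n) \<circ>
      (\<lambda>k. nat.fold_reduce (Suc n) k (Suc n + k))"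
      by auto
    have 2: "?P n (d \<circ> ((+) (Suc n)))"
      unfolding d_def nat.diagseq_seqseq 1
      by (intro convergent_subseq_convergent Pn_seqseq nat.subseq_diagonal_rest)
    then obtain L where 3: "(\<lambda>na. \<gamma> (d (na + Suc n)) n) \<longlonglongrightarrow> L"
      by (auto simp: add.commute dest: convergentD)
    then have "(\<lambda>k. \<gamma> (d k) n) \<longlonglongrightarrow> L"
      by (rule LIMSEQ_offset)
    then show ?thesis
      by (auto simp: convergent_def)
  qed
  show ?thesis
    using subseq rat_cnv by (intro exI[of _ d] exI[of _ "\<lambda>n. lim (\<lambda>k. \<gamma> (d k) n)"])
      (auto simp: convergent_LIMSEQ_iff)
qed

lemma est:
  assumes p: "0 \<le> p" "p \<le> 1"
    and q: "q \<longlonglongrightarrow> p" "\<And>k. 0 \<le> q k \<and> q k \<le> 1"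
    and \<gamma>: "\<And>k. stake_seq (\<gamma> k)" "\<And>k. \<forall>i\<ge>n k. \<gamma> k i = 0"
    and conv: "\<And>i. (\<lambda>k. \<gamma> k i) \<longlonglongrightarrow> c i"
    and eta: "0 < \<eta>" and e: "0 < \<epsilon>"
  shows "eventually (\<lambda>k. EE (q k) (\<gamma> k) {..<n k} (thr t)
     \<le> EE p c {..<N} (thr (t - p * (1 - sum c {..<N}) - \<eta> - \<eta>)) + \<epsilon> + \<gamma> k N / \<eta>\<^sup>2) sequentially"
proof -
  define \<mu> where "\<mu> k = q k * (1 - sum (\<gamma> k) {..<N})" for k
  have step: "EE (q k) (\<gamma> k) {..<n k} (thr t) \<le> EE (q k) (\<gamma> k) {..<N} (thr (t - \<mu> k - \<eta>)) + \<gamma> k N / \<eta>\<^sup>2" for k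
  proof -
    note b = stake_basic[OF \<gamma>(1)[of k]]
    define n' where "n' = max (n k) N"
    have qk: "0 \<le> q k" "q k \<le> 1" using q(2)[of k] by auto
    have u1: "{..<n'} = {..<n k} \<union> {n k..<n'}" by (auto simp: n'_def)
    have e1: "EE (q k) (\<gamma> k) {..<n k} (thr t) = EE (q k) (\<gamma> k) {..<n'} (thr t)"
      unfolding u1 using \<gamma>(2)[of k] by (intro EE_zero_weights[symmetric]) auto
    have u2: "{..<n'} = {..<N} \<union> {N..<n'}" by (auto simp: n'_def)
    have s1: "sum (\<gamma> k) {..<n'} = 1"
    proof -
      have "\<gamma> k sums sum (\<gamma> k) {..<n'}" using \<gamma>(2)[of k] by (intro sums_finite) (auto simp: n'_def)
      then show ?thesis using b(2) sums_unique by force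
    qed
    have s2: "sum (\<gamma> k) {N..<n'} = 1 - sum (\<gamma> k) {..<N}"
      using s1 unfolding u2 by (subst (asm) sum.union_disjoint) auto
    have e2: "EE (q k) (\<gamma> k) {..<n'} (thr t) \<le> EE (q k) (\<gamma> k) {..<N} (thr (t - \<mu> k - \<eta>)) + EE (q k) (\<gamma> k) {N..<n'} (thr (\<mu> k + \<eta>))"
      unfolding u2 using qk by (intro EE_split_bound) (auto simp: thr_def)
    have e3: "EE (q k) (\<gamma> k) {N..<n'} (thr (\<mu> k + \<eta>)) \<le> \<gamma> k N / \<eta>\<^sup>2"
    proof -
      have pt: "thr (\<mu> k + \<eta>) y \<le> (1 / \<eta>\<^sup>2) * (y + - \<mu> k)\<^sup>2" for y
      proof (cases "\<mu> k + \<eta> \<le> y")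
        case True
        then have "\<eta>\<^sup>2 \<le> (y + - \<mu> k)\<^sup>2" using eta by (intro power_mono) auto
        then show ?thesis using True eta by (simp add: thr_def field_simps)
      qed (simp add: thr_def)
      have "EE (q k) (\<gamma> k) {N..<n'} (thr (\<mu> k + \<eta>)) \<le> EE (q k) (\<gamma> k) {N..<n'} (\<lambda>y. (1 / \<eta>\<^sup>2) * (y + - \<mu> k)\<^sup>2)"
        using qk pt by (intro EE_mono_g) auto
      also have "\<dots> = (1 / \<eta>\<^sup>2) * ((- \<mu> k + q k * sum (\<gamma> k) {N..<n'})\<^sup>2 + q k * (1 - q k) * (\<Sum>i\<in>{N..<n'}. (\<gamma> k i)\<^sup>2))"
        by (simp only: EE_cmult EE_var[OF finite_atLeastLessThan])
      also have "- \<mu> k + q k * sum (\<gamma> k) {N..<n'} = 0" using s2 by (simp add: \<mu>_def)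
      also have "q k * (1 - q k) * (\<Sum>i\<in>{N..<n'}. (\<gamma> k i)\<^sup>2) \<le> 1 * (\<Sum>i\<in>{N..<n'}. \<gamma> k N * \<gamma> k i)"
      proof (rule mult_mono)
        show "q k * (1 - q k) \<le> 1" using qk by (simp add: mult_le_one)
        show "(\<Sum>i\<in>{N..<n'}. (\<gamma> k i)\<^sup>2) \<le> (\<Sum>i\<in>{N..<n'}. \<gamma> k N * \<gamma> k i)"
        proof (rule sum_mono)
          fix i assume "i \<in> {N..<n'}"
          then have "\<gamma> k i \<le> \<gamma> k N" using \<gamma>(1)[of k] by (auto simp: stake_seq_def decseq_def)
          then show "(\<gamma> k i)\<^sup>2 \<le> \<gamma> k N * \<gamma> k i" using b(3)[of i] by (simp add: power2_eq_square mult_right_mono)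
        qed
        show "(0::real) \<le> 1" by simp
        show "0 \<le> (\<Sum>i\<in>{N..<n'}. (\<gamma> k i)\<^sup>2)" by (simp add: sum_nonneg)
      qed
      also have "(\<Sum>i\<in>{N..<n'}. \<gamma> k N * \<gamma> k i) = \<gamma> k N * (1 - sum (\<gamma> k) {..<N})"
        using s2 by (simp add: sum_distrib_left[symmetric])
      also have "\<dots> \<le> \<gamma> k N"
        by (rule mult_left_le) (use b(3)[of N] sum_nonneg[of "{..<N}" "\<gamma> k"] b(3) in auto)
      finally show ?thesis using eta by (simp add: divide_right_mono)
    qed
    show ?thesis using e1 e2 e3 by linarith
  qed
  have mu: "\<mu> \<longlonglongrightarrow> p * (1 - sum c {..<N})"
    unfolding \<mu>_def by (intro tendsto_intros q conv)
  have "eventually (\<lambda>k. EE (q k) (\<gamma> k) {..<N} (thr (t - \<mu> k - \<eta>))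
      \<le> EE p c {..<N} (thr (t - p * (1 - sum c {..<N}) - \<eta> - \<eta>)) + \<epsilon>) sequentially"
    by (rule EE_limsup[OF _ q conv _ eta e]) (auto intro!: tendsto_intros mu)
  then show ?thesis
  proof eventually_elim
    case (elim k)
    then show ?case using step[of k] by simp
  qed
qed

lemma chooseK:
  assumes t: "0 < t" "t \<le> 1" and p: "0 \<le> p" "p < t"
    and cnn: "\<And>i. 0 \<le> c i" and cdec: "decseq c" and csum: "\<And>N. sum c {..<N} \<le> 1"
    and e: "0 < \<epsilon>"
  shows "\<exists>N \<eta>. 0 < \<eta> \<and> c N < \<epsilon> * \<eta>\<^sup>2 \<and>
     EE p c {..<N} (thr (t - p * (1 - sum c {..<N}) - \<eta> - \<eta>)) \<le> Gf t p + \<epsilon>"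
proof -
  have p1: "p \<le> 1" using p t by simp
  have sc: "summable c" using cnn csum by (intro summableI_nonneg_bounded) auto
  have clim: "c \<longlonglongrightarrow> 0" by (rule summable_LIMSEQ_zero[OF sc])
  define \<Lambda> where "\<Lambda> = 1 - suminf c"
  have lamN: "\<Lambda> \<le> 1 - sum c {..<N}" for N
    using sum_le_suminf[OF sc, of "{..<N}"] cnn by (simp add: \<Lambda>_def)
  have sl1: "suminf c \<le> 1"
    using summable_LIMSEQ[OF sc] csum by (intro LIMSEQ_le_const2) auto
  have Gnn: "0 \<le> Gf t p" using Gf_nonneg[OF p(1) p1] .
  have evc: "eventually (\<lambda>N. c N < \<epsilon> * \<eta>\<^sup>2) sequentially" if "0 < \<eta>" for \<eta>
    using clim that e by (intro order_tendstoD) auto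
  show ?thesis
  proof (cases "0 < \<Lambda>")
    case True
    define \<eta> where "\<eta> = (t - p) * \<Lambda> / 4"
    have eta: "0 < \<eta>" using True p by (simp add: \<eta>_def)
    obtain N where N: "c N < \<epsilon> * \<eta>\<^sup>2" using evc[OF eta] eventually_sequentially by auto
    define S where "S = sum c {..<N}"
    define a where "a = t - p * (1 - S) - \<eta> - \<eta>"
    have "(t - p) * \<Lambda> \<le> (t - p) * (1 - S)" using lamN[of N] p by (intro mult_left_mono) (auto simp: S_def)
    then have aS: "t * S < a" using eta by (simp add: a_def \<eta>_def algebra_simps)
    have S0: "0 \<le> S" using cnn by (simp add: S_def sum_nonneg)
    have "EE p c {..<N} (thr a) \<le> Gf t p"
    proof (cases "0 < S")
      case True
      then show ?thesis using Gf_normalize[OF p(1) p1 cnn cdec, of N t a] aS by (simp add: S_def)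
    next
      case False
      then have S00: "S = 0" using S0 by simp
      then have z: "\<forall>i\<in>{..<N}. c i = 0" using cnn by (simp add: S_def sum_nonneg_eq_0_iff)
      have "EE p c {..<N} (thr a) = EE p (\<lambda>_. 0) {..<N} (thr a)" using z by (intro EE_cong) auto
      also have "\<dots> = EE p (\<lambda>_. 0) {..<N} (\<lambda>_. 0)"
        unfolding EE_def using aS S00 t by (intro sum.cong refl) (simp add: thr_def)
      also have "\<dots> = 0" by (simp add: EE_const)
      finally show ?thesis using Gnn by simp
    qed
    then show ?thesis using N eta e by (intro exI[of _ N] exI[of _ \<eta>]) (auto simp: a_def S_def)
  next
    case False
    then have L0: "\<Lambda> = 0" using sl1 by (simp add: \<Lambda>_def)
    show ?thesis
    proof (cases "\<exists>n0. \<forall>i\<ge>n0. c i = 0")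
      case True
      then obtain n0 where n0: "\<forall>i\<ge>n0. c i = 0" by blast
      have cs: "c sums sum c {..<n0}" using n0 by (intro sums_finite) auto
      then have S1: "sum c {..<n0} = 1" using L0 sums_unique[OF cs] by (simp add: \<Lambda>_def)
      have st: "stake_seq c" unfolding stake_seq_def using cnn cdec cs S1 by simp
      have "eventually (\<lambda>s. EE p c {..<n0} (thr s) = EE p c {..<n0} (thr t)) (at_left t)"
        by (rule EE_thr_left) simp
      then obtain b where b: "b < t" "\<And>y. b < y \<Longrightarrow> y < t \<Longrightarrow> EE p c {..<n0} (thr y) = EE p c {..<n0} (thr t)"
        using eventually_at_left[of "t - 1" t] by auto
      define \<eta> where "\<eta> = (t - b) / 4"
      have eta: "0 < \<eta>" using b by (simp add: \<eta>_def)
      have bb: "b < t - \<eta> - \<eta>" "t - \<eta> - \<eta> < t" using eta b(1) by (simp_all add: \<eta>_def field_simps)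
      have "EE p c {..<n0} (thr (t - p * (1 - sum c {..<n0}) - \<eta> - \<eta>)) = EE p c {..<n0} (thr (t - \<eta> - \<eta>))"
        using S1 by simp
      also have "\<dots> = EE p c {..<n0} (thr t)" using b(2)[OF bb] .
      finally have "EE p c {..<n0} (thr (t - p * (1 - sum c {..<n0}) - \<eta> - \<eta>)) = EE p c {..<n0} (thr t)" .
      also have "\<dots> \<le> Gf t p" using Gf_upper[OF p(1) p1 st n0] .
      finally show ?thesis using eta e n0 by (intro exI[of _ n0] exI[of _ \<eta>]) auto
    next
      case False
      have pos: "0 < c i" for i
      proof (rule ccontr)
        assume "\<not> 0 < c i"
        then have ci: "c i = 0" using cnn[of i] by simp
        have "\<forall>j\<ge>i. c j = 0"
        proof (intro allI impI)
          fix j assume "i \<le> j"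
          then have "c j \<le> c i" using cdec by (auto simp: decseq_def)
          then show "c j = 0" using ci cnn[of j] by simp
        qed
        then show False using False by blast
      qed
      show ?thesis
      proof (cases "p = 0")
        case True
        define \<eta> where "\<eta> = t / 4"
        have eta: "0 < \<eta>" using t by (simp add: \<eta>_def)
        obtain N where N: "c N < \<epsilon> * \<eta>\<^sup>2" using evc[OF eta] eventually_sequentially by auto
        have "EE p c {..<N} (thr (t - p * (1 - sum c {..<N}) - \<eta> - \<eta>)) = 0"
          using True t by (simp add: EE_zero_p thr_def \<eta>_def)
        then show ?thesis using N eta Gnn e by (intro exI[of _ N] exI[of _ \<eta>]) auto
      next
        case False
        define m where "m = max p (1 - p)"
        have m1: "m < 1" using False p t by (simp add: m_def)
        obtain Nf where Nf: "m ^ Nf < \<epsilon>" using real_arch_pow_inv[OF e m1] by blast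
        obtain F L where FL: "finite F" "card F = Nf" "0 < L" "sep c F L"
          using sep_exists[OF pos clim] by blast
        obtain M0 where M0: "F \<subseteq> {..<M0}" using FL(1) finite_nat_bounded by blast
        define \<eta> where "\<eta> = L / 2"
        have eta: "0 < \<eta>" using FL(3) by (simp add: \<eta>_def)
        have "eventually (\<lambda>N. c N < \<epsilon> * \<eta>\<^sup>2 \<and> M0 \<le> N \<and> 1 \<le> N) sequentially"
          using evc[OF eta] eventually_ge_at_top[of M0] eventually_ge_at_top[of 1]
          by eventually_elim auto
        then obtain N where N: "c N < \<epsilon> * \<eta>\<^sup>2" "M0 \<le> N" "1 \<le> N" using eventually_sequentially by auto
        define S where "S = sum c {..<N}"
        have S0: "0 < S" unfolding S_def using N(3) pos cnn
          by (intro sum_pos2[of _ 0]) auto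
        define a where "a = t - p * (1 - S) - \<eta> - \<eta>"
        define b where "b = t * S"
        have S1: "S \<le> 1" using csum by (simp add: S_def)
        have "EE p c {..<N} (thr a) \<le> Gf t p + \<epsilon>"
        proof (cases "b \<le> a")
          case True
          then have "EE p c {..<N} (thr a) \<le> Gf t p"
            using Gf_normalize[OF p(1) p1 cnn cdec, of N t a] S0 by (simp add: S_def b_def)
          then show ?thesis using e by simp
        next
          case False
          define lw where "lw = b - a"
          have nn: "0 \<le> (t - p) * (1 - S)" using p S1 by simp
          have lweq: "lw = 2 * \<eta> - (t - p) * (1 - S)" by (simp add: lw_def a_def b_def algebra_simps)
          have lwL: "lw \<le> L" using nn lweq by (simp add: \<eta>_def)
          have pt: "thr a y \<le> thr b y + (if a \<le> y \<and> y < a + lw then 1 else 0)" for y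
            by (auto simp: thr_def lw_def)
          have "EE p c {..<N} (thr a) \<le> EE p c {..<N} (\<lambda>y. thr b y + (if a \<le> y \<and> y < a + lw then 1 else 0))"
            using p p1 pt by (intro EE_mono_g) auto
          also have "\<dots> = EE p c {..<N} (thr b) + EE p c {..<N} (\<lambda>y. if a \<le> y \<and> y < a + lw then 1 else 0)"
            by (rule EE_add)
          also have "EE p c {..<N} (thr b) \<le> Gf t p"
            using Gf_normalize[OF p(1) p1 cnn cdec, of N t b] S0 by (simp add: S_def b_def)
          also have "EE p c {..<N} (\<lambda>y. if a \<le> y \<and> y < a + lw then 1 else 0) \<le> m ^ card F"
            unfolding m_def using M0 N(2) lwL p p1 by (intro EE_atom[OF _ _ FL(4)]) auto
          finally show ?thesis using Nf FL(2) by simp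
        qed
        then show ?thesis using N eta by (intro exI[of _ N] exI[of _ \<eta>]) (auto simp: a_def S_def)
      qed
    qed
  qed
qed

lemma core2:
  assumes t: "0 < t" "t \<le> 1" and p: "0 \<le> p" "p < t"
    and q: "q \<longlonglongrightarrow> p" "\<And>k. 0 \<le> q k \<and> q k \<le> 1"
    and \<gamma>: "\<And>k. stake_seq (\<gamma> k)" "\<And>k. \<forall>i\<ge>n k. \<gamma> k i = 0"
    and conv: "\<And>i. (\<lambda>k. \<gamma> k i) \<longlonglongrightarrow> c i"
    and big: "\<And>k. Gf t p + \<epsilon> \<le> EE (q k) (\<gamma> k) {..<n k} (thr t)"
    and e: "0 < \<epsilon>"
  shows False
proof -
  have p1: "p \<le> 1" using p t by simp
  have cnn: "0 \<le> c i" for i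
    using conv[of i] stake_basic(3)[OF \<gamma>(1)] by (intro LIMSEQ_le_const) auto
  have cdec: "decseq c"
    unfolding decseq_def
  proof (intro allI impI)
    fix i j :: nat assume "i \<le> j"
    then show "c j \<le> c i"
      using conv[of i] conv[of j] \<gamma>(1) by (intro LIMSEQ_le) (auto simp: stake_seq_def decseq_def)
  qed
  have csum: "sum c {..<N} \<le> 1" for N
  proof -
    have "(\<lambda>k. sum (\<gamma> k) {..<N}) \<longlonglongrightarrow> sum c {..<N}" by (intro tendsto_sum conv)
    then show ?thesis using stake_basic(4)[OF \<gamma>(1)] by (intro LIMSEQ_le_const2) auto
  qed
  have e4: "0 < \<epsilon> / 4" using e by simp
  obtain N \<eta> where K: "0 < \<eta>" "c N < \<epsilon> / 4 * \<eta>\<^sup>2"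
      "EE p c {..<N} (thr (t - p * (1 - sum c {..<N}) - \<eta> - \<eta>)) \<le> Gf t p + \<epsilon> / 4"
    using chooseK[OF t p cnn cdec csum e4] by blast
  have ev1: "eventually (\<lambda>k. EE (q k) (\<gamma> k) {..<n k} (thr t)
     \<le> EE p c {..<N} (thr (t - p * (1 - sum c {..<N}) - \<eta> - \<eta>)) + \<epsilon> / 4 + \<gamma> k N / \<eta>\<^sup>2) sequentially"
    by (rule est[OF p(1) p1 q \<gamma> conv K(1) e4])
  have "(\<lambda>k. \<gamma> k N / \<eta>\<^sup>2) \<longlonglongrightarrow> c N / \<eta>\<^sup>2" using K(1) by (intro tendsto_intros conv) simp
  moreover have "c N / \<eta>\<^sup>2 < \<epsilon> / 4"
  proof -
    have "0 < \<eta>\<^sup>2" using K(1) by simp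
    then show ?thesis using K(2) by (simp add: pos_divide_less_eq)
  qed
  ultimately have ev2: "eventually (\<lambda>k. \<gamma> k N / \<eta>\<^sup>2 < \<epsilon> / 4) sequentially"
    by (rule order_tendstoD)
  have "eventually (\<lambda>k. False) sequentially"
    using ev1 ev2
  proof eventually_elim
    case (elim k)
    then show False using big[of k] K(3) e by linarith
  qed
  then show False by simp
qed

lemma Gf_lsc:
  assumes t: "0 < t" "t \<le> 1" and p: "p \<in> {0..t}" and a: "a < Gf t p"
  shows "eventually (\<lambda>q. a < Gf t q) (at p within {0..t})"
proof -
  have p01: "0 \<le> p" "p \<le> 1" using p t by auto
  obtain x where x: "x \<in> Gset t p" "a < x"
    using a less_cSup_iff[OF Gset_ne Gset_bdd[OF p01]] unfolding Gf_def by blast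
  then obtain c n where cn: "x = EE p c {..<n} (thr t)" "stake_seq c" "\<forall>i\<ge>n. c i = 0"
    by (auto simp: Gset_def)
  have "((\<lambda>q. EE q c {..<n} (thr t)) \<longlongrightarrow> x) (at p)"
    using isCont_EE[where c=c and A="{..<n}" and g="thr t" and x=p] cn(1) by (simp add: isCont_def)
  then have "((\<lambda>q. EE q c {..<n} (thr t)) \<longlongrightarrow> x) (at p within {0..t})"
    by (rule tendsto_mono[OF at_le[OF subset_UNIV]])
  then have ev1: "eventually (\<lambda>q. a < EE q c {..<n} (thr t)) (at p within {0..t})"
    using x(2) by (rule order_tendstoD)
  have ev2: "eventually (\<lambda>q. q \<in> {0..t}) (at p within {0..t})"
    by (simp add: eventually_at_filter)
  show ?thesis
    using ev1 ev2
  proof eventually_elim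
    case (elim q)
    then have "0 \<le> q" "q \<le> 1" using t by auto
    then show ?case using elim(1) Gf_upper[OF _ _ cn(2,3), of q t] by simp
  qed
qed

lemma Gf_usc:
  assumes t: "0 < t" "t \<le> 1" and p: "p \<in> {0..t}" and a: "Gf t p < a"
  shows "eventually (\<lambda>q. Gf t q < a) (at p within {0..t})"
proof (cases "p = t")
  case True
  have ev2: "eventually (\<lambda>q. q \<in> {0..t}) (at p within {0..t})"
    by (simp add: eventually_at_filter)
  then show ?thesis
  proof eventually_elim
    case (elim q)
    then have "Gf t q \<le> Gf t p" using True t by (intro Gf_mono) auto
    then show ?case using a by simp
  qed
next
  case False
  then have pt: "0 \<le> p" "p < t" using p by auto
  show ?thesis
  proof (rule sequentially_imp_eventually_within, intro allI impI)
    fix f :: "nat \<Rightarrow> real" assume f: "(\<forall>n. f n \<in> {0..t} \<and> f n \<noteq> p) \<and> f \<longlonglongrightarrow> p"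
    show "eventually (\<lambda>n. Gf t (f n) < a) sequentially"
    proof (rule ccontr)
      assume "\<not> eventually (\<lambda>n. Gf t (f n) < a) sequentially"
      then have "frequently (\<lambda>n. \<not> Gf t (f n) < a) sequentially" by (simp add: not_eventually)
      then have "infinite {n. \<not> Gf t (f n) < a}"
        by (simp add: frequently_cofinite[symmetric] cofinite_eq_sequentially)
      then obtain r :: "nat \<Rightarrow> nat" where r: "strict_mono r" "\<And>k. r k \<in> {n. \<not> Gf t (f n) < a}"
        using infinite_enumerate by blast
      define \<epsilon> where "\<epsilon> = (a - Gf t p) / 2"
      have e: "0 < \<epsilon>" using a by (simp add: \<epsilon>_def)
      have fr01: "0 \<le> f (r k)" "f (r k) \<le> 1" for k
      proof -
        have "f (r k) \<in> {0..t}" using f by blast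
        then show "0 \<le> f (r k)" "f (r k) \<le> 1" using t by auto
      qed
      have "\<forall>k. \<exists>c. \<exists>n. stake_seq c \<and> (\<forall>i\<ge>n. c i = 0) \<and> Gf t p + \<epsilon> \<le> EE (f (r k)) c {..<n} (thr t)"
      proof
        fix k
        have "a \<le> Gf t (f (r k))" using r(2)[of k] by simp
        then have "Gf t p + \<epsilon> < Gf t (f (r k))" using a unfolding \<epsilon>_def by (auto simp: field_simps)
        then obtain x where x: "x \<in> Gset t (f (r k))" "Gf t p + \<epsilon> < x"
          using less_cSup_iff[OF Gset_ne Gset_bdd[OF fr01[of k]]] unfolding Gf_def by blast
        then obtain c n where cn: "stake_seq c" "\<forall>i\<ge>n. c i = 0" "Gf t p + \<epsilon> < EE (f (r k)) c {..<n} (thr t)"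
          by (auto simp: Gset_def)
        then show "\<exists>c. \<exists>n. stake_seq c \<and> (\<forall>i\<ge>n. c i = 0) \<and> Gf t p + \<epsilon> \<le> EE (f (r k)) c {..<n} (thr t)"
          by (intro exI[of _ c] exI[of _ n]) auto
      qed
      then obtain \<gamma> where "\<forall>k. \<exists>n. stake_seq (\<gamma> k) \<and> (\<forall>i\<ge>n. \<gamma> k i = 0) \<and> Gf t p + \<epsilon> \<le> EE (f (r k)) (\<gamma> k) {..<n} (thr t)"
        by (metis choice)
      then obtain nn where G: "\<And>k. stake_seq (\<gamma> k) \<and> (\<forall>i\<ge>nn k. \<gamma> k i = 0) \<and> Gf t p + \<epsilon> \<le> EE (f (r k)) (\<gamma> k) {..<nn k} (thr t)"
        by (metis choice)
      have bd: "0 \<le> \<gamma> k i \<and> \<gamma> k i \<le> 1" for k i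
      proof -
        note bb = stake_basic[OF conjunct1[OF G[of k]]]
        have "\<gamma> k i \<le> sum (\<gamma> k) {..<Suc i}" using bb(3) by (simp add: sum_nonneg)
        then show ?thesis using bb(3)[of i] bb(4)[of "Suc i"] by simp
      qed
      obtain r2 c where r2: "strict_mono r2" "\<And>i. (\<lambda>k. \<gamma> (r2 k) i) \<longlonglongrightarrow> c i"
        using diag[of \<gamma>] bd by blast
      have qlim: "(\<lambda>k. f (r (r2 k))) \<longlonglongrightarrow> p"
      proof -
        have "(f \<circ> r) \<longlonglongrightarrow> p" using f by (intro LIMSEQ_subseq_LIMSEQ[OF _ r(1)]) auto
        then have "((f \<circ> r) \<circ> r2) \<longlonglongrightarrow> p" by (rule LIMSEQ_subseq_LIMSEQ[OF _ r2(1)])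
        then show ?thesis by (simp add: comp_def)
      qed
      show False
        by (rule core2[OF t pt qlim, of "\<lambda>k. \<gamma> (r2 k)" "\<lambda>k. nn (r2 k)" c \<epsilon>])
          (use G fr01 r2(2) e in auto)
    qed
  qed
qed

theorem theorem8:
  fixes t :: real
  assumes "0 < t" and "t \<le> 1"
  shows "continuous_on {0..t} (\<lambda>p. pi_fun p t)"
proof -
  have "continuous_on {0..t} (\<lambda>p. Gf t p)"
    unfolding continuous_on_def
  proof
    fix p assume p: "p \<in> {0..t}"
    show "((\<lambda>p. Gf t p) \<longlongrightarrow> Gf t p) (at p within {0..t})"
      by (rule order_tendstoI) (use Gf_lsc[OF assms p] Gf_usc[OF assms p] in auto)
  qed
  moreover have "\<And>p. p \<in> {0..t} \<Longrightarrow> pi_fun p t = Gf t p"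
    using assms by (intro pi_eq) auto
  ultimately show ?thesis using continuous_on_cong[of "{0..t}" "{0..t}" "\<lambda>p. pi_fun p t" "\<lambda>p. Gf t p"] by simp
qed

end
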